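(* Let $S$ be a $\Gamma$-hemiring, let $\mu$ be a prime fuzzy h-ideal of $S$ and let $x\in S$. Then for all $y\in S$, $\langle x,\mu\rangle(y)=\inf_{s_1\in S,\ \eta,\delta\in\Gamma}\langle x\eta s_1\delta x,\mu\rangle(y)$.
   Context: A $\Gamma$-hemiring is a pair of additive commutative semigroups with zero $S$ and $\Gamma$ with a map $S\times\Gamma\times S\to S$, $(a,\alpha,b)\mapsto a\alpha b$, such that for all $a,b,c\in S$, $\alpha,\beta\in\Gamma$: $(a+b)\alpha c=a\alpha c+b\alpha c$; $a\alpha(b+c)=a\alpha b+a\alpha c$; $a(\alpha+\beta)b=a\alpha b+a\beta b$; $a\alpha(b\beta c)=(a\alpha b)\beta c$; $0\alpha a=0=a\alpha0$; $a0b=0=b0a$. A fuzzy h-ideal of $S$ is a map $\mu:S\to[0,1]$, not identically $0$, such that for all $x,y,a,b,z\in S$, $\gamma\in\Gamma$: $\mu(x+y)\ge\min\{\mu(x),\mu(y)\}$; $\mu(x\gamma y)\ge\mu(x)$ and $\mu(x\gamma y)\ge\mu(y)$; $x+a+z=b+z$ implies $\mu(x)\ge\min\{\mu(a),\mu(b)\}$. For fuzzy subsets $\sigma,\theta$, the h-product is $(\sigma\Gamma_h\theta)(x)=\sup\min\{\sigma(a_1),\sigma(a_2),\theta(b_1),\theta(b_2)\}$, the supremum over all $z,a_1,a_2,b_1,b_2\in S$, $\gamma,\delta\in\Gamma$ with $x+a_1\gamma b_1+z=a_2\delta b_2+z$, and $0$ if no such expression exists. Inclusion means pointwise $\le$.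 A fuzzy h-ideal $\mu$ is prime if it is not constant and for any fuzzy h-ideals $\sigma,\theta$, $\sigma\Gamma_h\theta\subseteq\mu$ implies $\sigma\subseteq\mu$ or $\theta\subseteq\mu$. The extension of $\mu$ by $x$ is $\langle x,\mu\rangle(y)=\inf_{s\in S,\ \alpha,\gamma\in\Gamma}\mu(x\alpha s\gamma y)$. *)

theory Defs
  imports Main "HOL.Real"
begin

definition gamma_hemiring :: "('a::comm_monoid_add \<Rightarrow> 'g::comm_monoid_add \<Rightarrow> 'a \<Rightarrow> 'a) \<Rightarrow> bool" where
  "gamma_hemiring m \<longleftrightarrow>
     (\<forall>a b c \<alpha>. m (a + b) \<alpha> c = m a \<alpha> c + m b \<alpha> c) \<and>
     (\<forall>a b c \<alpha>. m a \<alpha> (b + c) = m a \<alpha> b + m a \<alpha> c) \<and>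
     (\<forall>a b \<alpha> \<beta>. m a (\<alpha> + \<beta>) b = m a \<alpha> b + m a \<beta> b) \<and>
     (\<forall>a b c \<alpha> \<beta>. m a \<alpha> (m b \<beta> c) = m (m a \<alpha> b) \<beta> c) \<and>
     (\<forall>a \<alpha>. m 0 \<alpha> a = 0 \<and> m a \<alpha> 0 = 0) \<and>
     (\<forall>a b. m a 0 b = 0 \<and> m b 0 a = 0)"

definition fuzzy_subset :: "('a \<Rightarrow> real) \<Rightarrow> bool" where
  "fuzzy_subset \<mu> \<longleftrightarrow> (\<forall>x. 0 \<le> \<mu> x \<and> \<mu> x \<le> 1)"

definition fuzzy_h_ideal ::
  "('a::comm_monoid_add \<Rightarrow> 'g \<Rightarrow> 'a \<Rightarrow> 'a) \<Rightarrow> ('a \<Rightarrow> real) \<Rightarrow> bool" where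
  "fuzzy_h_ideal m \<mu> \<longleftrightarrow>
     fuzzy_subset \<mu> \<and> (\<exists>x. \<mu> x \<noteq> 0) \<and>
     (\<forall>x y. \<mu> (x + y) \<ge> min (\<mu> x) (\<mu> y)) \<and>
     (\<forall>x \<gamma> y. \<mu> (m x \<gamma> y) \<ge> \<mu> x \<and> \<mu> (m x \<gamma> y) \<ge> \<mu> y) \<and>
     (\<forall>x a b z. x + a + z = b + z \<longrightarrow> \<mu> x \<ge> min (\<mu> a) (\<mu> b))"

definition h_product ::
  "('a::comm_monoid_add \<Rightarrow> 'g \<Rightarrow> 'a \<Rightarrow> 'a) \<Rightarrow> ('a \<Rightarrow> real) \<Rightarrow> ('a \<Rightarrow> real) \<Rightarrow> 'a \<Rightarrow> real" where
  "h_product m \<sigma> \<theta> x =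
     (let V = {min (min (\<sigma> a1) (\<sigma> a2)) (min (\<theta> b1) (\<theta> b2)) | z a1 a2 b1 b2 \<gamma> \<delta>.
                 x + m a1 \<gamma> b1 + z = m a2 \<delta> b2 + z}
      in if V = {} then 0 else Sup V)"

definition prime_fuzzy_h_ideal ::
  "('a::comm_monoid_add \<Rightarrow> 'g \<Rightarrow> 'a \<Rightarrow> 'a) \<Rightarrow> ('a \<Rightarrow> real) \<Rightarrow> bool" where
  "prime_fuzzy_h_ideal m \<mu> \<longleftrightarrow>
     fuzzy_h_ideal m \<mu> \<and> (\<exists>x y. \<mu> x \<noteq> \<mu> y) \<and>
     (\<forall>\<sigma> \<theta>. fuzzy_h_ideal m \<sigma> \<longrightarrow> fuzzy_h_ideal m \<theta> \<longrightarrow>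
        (\<forall>x. h_product m \<sigma> \<theta> x \<le> \<mu> x) \<longrightarrow>
        (\<forall>x. \<sigma> x \<le> \<mu> x) \<or> (\<forall>x. \<theta> x \<le> \<mu> x))"

definition ext_fuzzy ::
  "('a \<Rightarrow> 'g \<Rightarrow> 'a \<Rightarrow> 'a) \<Rightarrow> 'a \<Rightarrow> ('a \<Rightarrow> real) \<Rightarrow> 'a \<Rightarrow> real" where
  "ext_fuzzy m x \<mu> y = Inf {\<mu> (m (m x \<alpha> s) \<gamma> y) | s \<alpha> \<gamma>. True}"

end

theory Submission
  imports Defs
begin

definition hset :: "('a::comm_monoid_add \<Rightarrow> 'g \<Rightarrow> 'a \<Rightarrow> 'a) \<Rightarrow> 'a set \<Rightarrow> bool" where
  "hset m I \<longleftrightarrow> I \<noteq> {} \<and> (\<forall>a b. a \<in> I \<longrightarrow> b \<in> I \<longrightarrow> a + b \<in> I) \<and>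
     (\<forall>a \<gamma> c. a \<in> I \<longrightarrow> m a \<gamma> c \<in> I \<and> m c \<gamma> a \<in> I) \<and>
     (\<forall>x a b z. x + a + z = b + z \<longrightarrow> a \<in> I \<longrightarrow> b \<in> I \<longrightarrow> x \<in> I)"

lemma ind_ideal:
  assumes "hset m I" "0 < t" "t \<le> (1::real)"
  shows "fuzzy_h_ideal m (\<lambda>w. if w \<in> I then t else 0)"
proof -
  have ne: "I \<noteq> {}" and ad: "\<And>a b. a \<in> I \<Longrightarrow> b \<in> I \<Longrightarrow> a + b \<in> I"
    and ml: "\<And>a \<gamma> c. a \<in> I \<Longrightarrow> m a \<gamma> c \<in> I" and mr: "\<And>a \<gamma> c. a \<in> I \<Longrightarrow> m c \<gamma> a \<in> I"
    and hc: "\<And>x a b z. x + a + z = b + z \<Longrightarrow> a \<in> I \<Longrightarrow> b \<in> I \<Longrightarrow> x \<in> I"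
    using assms(1) unfolding hset_def by blast+
  obtain i where i: "i \<in> I" using ne by blast
  show ?thesis unfolding fuzzy_h_ideal_def fuzzy_subset_def
  proof (intro conjI allI impI)
    show "\<exists>x. (if x \<in> I then t else 0) \<noteq> 0" using i assms by auto
  next
    fix x y show "min (if x \<in> I then t else 0) (if y \<in> I then t else 0) \<le> (if x + y \<in> I then t else 0)"
      using ad assms by auto
  next
    fix x \<gamma> y show "(if x \<in> I then t else 0) \<le> (if m x \<gamma> y \<in> I then t else 0)"
      using ml assms by auto
  next
    fix x \<gamma> y show "(if y \<in> I then t else 0) \<le> (if m x \<gamma> y \<in> I then t else 0)"
      using mr assms by auto
  next
    fix x a b z :: 'a assume "x + a + z = b + z"
    then show "min (if a \<in> I then t else 0) (if b \<in> I then t else 0) \<le> (if x \<in> I then t else 0)"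
      using hc[of x a z b] assms by auto
  qed (use assms in auto)
qed

lemma hprod_le:
  assumes mu: "fuzzy_h_ideal m \<mu>" and t: "0 < t"
    and cross: "\<forall>a\<in>I. \<forall>c\<in>K. \<forall>\<gamma>. t \<le> \<mu> (m a \<gamma> c)"
  shows "h_product m (\<lambda>w. if w \<in> I then t else 0) (\<lambda>w. if w \<in> K then t else 0) w \<le> \<mu> w"
proof -
  have nn: "\<And>v. 0 \<le> \<mu> v" using mu unfolding fuzzy_h_ideal_def fuzzy_subset_def by auto
  have hc: "\<And>x a b z. x + a + z = b + z \<Longrightarrow> min (\<mu> a) (\<mu> b) \<le> \<mu> x"
    using mu unfolding fuzzy_h_ideal_def by blast
  define V where "V = {min (min ((\<lambda>w. if w \<in> I then t else 0) a1) ((\<lambda>w. if w \<in> I then t else 0) a2))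
        (min ((\<lambda>w. if w \<in> K then t else 0) b1) ((\<lambda>w. if w \<in> K then t else 0) b2)) | z a1 a2 b1 b2 \<gamma> \<delta>.
                 w + m a1 \<gamma> b1 + z = m a2 \<delta> b2 + z}"
  have bound: "\<forall>v\<in>V. v \<le> \<mu> w"
  proof
    fix v assume "v \<in> V"
    then obtain z a1 a2 b1 b2 \<gamma> \<delta> where eq: "w + m a1 \<gamma> b1 + z = m a2 \<delta> b2 + z"
      and v: "v = min (min ((\<lambda>w. if w \<in> I then t else 0) a1) ((\<lambda>w. if w \<in> I then t else 0) a2))
        (min ((\<lambda>w. if w \<in> K then t else 0) b1) ((\<lambda>w. if w \<in> K then t else 0) b2))"
      unfolding V_def by blast
    show "v \<le> \<mu> w"
    proof (cases "a1 \<in> I \<and> a2 \<in> I \<and> b1 \<in> K \<and> b2 \<in> K")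
      case True
      then have "t \<le> \<mu> (m a1 \<gamma> b1)" "t \<le> \<mu> (m a2 \<delta> b2)" using cross by auto
      with hc[OF eq] True v show ?thesis by auto
    next
      case False
      then have "v = 0" using v t by auto
      then show ?thesis using nn by simp
    qed
  qed
  show ?thesis
    unfolding h_product_def Let_def V_def[symmetric]
    using bound nn by (auto intro: cSup_least)
qed

lemma prime_sets:
  assumes pr: "prime_fuzzy_h_ideal m \<mu>" and t: "0 < t" "t \<le> 1"
    and hI: "hset m I" and hK: "hset m K"
    and cross: "\<forall>a\<in>I. \<forall>c\<in>K. \<forall>\<gamma>. t \<le> \<mu> (m a \<gamma> c)"
  shows "(\<forall>a\<in>I. t \<le> \<mu> a) \<or> (\<forall>c\<in>K. t \<le> \<mu> c)"
proof -
  have mu: "fuzzy_h_ideal m \<mu>" using pr unfolding prime_fuzzy_h_ideal_def by blast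
  have P: "\<And>\<sigma> \<theta>. fuzzy_h_ideal m \<sigma> \<Longrightarrow> fuzzy_h_ideal m \<theta> \<Longrightarrow>
        (\<forall>x. h_product m \<sigma> \<theta> x \<le> \<mu> x) \<Longrightarrow> (\<forall>x. \<sigma> x \<le> \<mu> x) \<or> (\<forall>x. \<theta> x \<le> \<mu> x)"
    using pr unfolding prime_fuzzy_h_ideal_def by blast
  have "(\<forall>x. (\<lambda>w. if w \<in> I then t else 0) x \<le> \<mu> x) \<or> (\<forall>x. (\<lambda>w. if w \<in> K then t else 0) x \<le> \<mu> x)"
    by (rule P[OF ind_ideal[OF hI t] ind_ideal[OF hK t]]) (use hprod_le[OF mu t(1) cross] in blast)
  then show ?thesis by (metis (full_types))
qed

context
  fixes m :: "'a::comm_monoid_add \<Rightarrow> 'g::comm_monoid_add \<Rightarrow> 'a \<Rightarrow> 'a"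
  assumes gh: "gamma_hemiring m"
begin

lemma dl: "m (a + b) \<alpha> c = m a \<alpha> c + m b \<alpha> c" using gh[unfolded gamma_hemiring_def, THEN conjunct1] by blast
lemma dr: "m a \<alpha> (b + c) = m a \<alpha> b + m a \<alpha> c" using gh[unfolded gamma_hemiring_def, THEN conjunct2, THEN conjunct1] by blast
lemma asc: "m a \<alpha> (m b \<beta> c) = m (m a \<alpha> b) \<beta> c" using gh[unfolded gamma_hemiring_def, THEN conjunct2, THEN conjunct2, THEN conjunct2, THEN conjunct1] by blast

lemma step1:
  assumes pr: "prime_fuzzy_h_ideal m \<mu>" and t: "0 < t" "t \<le> 1"
    and hyp: "\<forall>s \<delta>. t \<le> \<mu> (m s \<delta> b)"
  shows "t \<le> \<mu> b"
proof -
  have mu: "fuzzy_h_ideal m \<mu>" using pr unfolding prime_fuzzy_h_ideal_def by blast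
  have mA: "\<And>x \<gamma> y. \<mu> x \<le> \<mu> (m x \<gamma> y)" "\<And>x \<gamma> y. \<mu> y \<le> \<mu> (m x \<gamma> y)"
    using mu unfolding fuzzy_h_ideal_def by auto
  have add: "\<And>x y. min (\<mu> x) (\<mu> y) \<le> \<mu> (x + y)" using mu unfolding fuzzy_h_ideal_def by blast
  have hc: "\<And>x a b z. x + a + z = b + z \<Longrightarrow> min (\<mu> a) (\<mu> b) \<le> \<mu> x"
    using mu unfolding fuzzy_h_ideal_def by blast
  define J where "J = {c. \<forall>s \<delta>. t \<le> \<mu> (m s \<delta> c)}"
  have hU: "hset m (UNIV::'a set)" unfolding hset_def by auto
  have hJ: "hset m J"
    unfolding hset_def
  proof (intro conjI allI impI)
    show "J \<noteq> {}" using hyp J_def by auto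
  next
    fix a c assume "a \<in> J" "c \<in> J"
    then have a: "\<And>s \<delta>. t \<le> \<mu> (m s \<delta> a)" and c: "\<And>s \<delta>. t \<le> \<mu> (m s \<delta> c)" unfolding J_def by auto
    show "a + c \<in> J" unfolding J_def
    proof (intro CollectI allI)
      fix s \<delta>
      have "min (\<mu> (m s \<delta> a)) (\<mu> (m s \<delta> c)) \<le> \<mu> (m s \<delta> (a + c))" using add[of "m s \<delta> a" "m s \<delta> c"] by (simp only: dr)
      then show "t \<le> \<mu> (m s \<delta> (a + c))" using a c by (meson min.boundedI order.trans)
    qed
  next
    fix a \<gamma> c assume a: "a \<in> J"
    show "m a \<gamma> c \<in> J" unfolding J_def
    proof (intro CollectI allI)
      fix s \<delta>
      have "t \<le> \<mu> (m s \<delta> a)" using a unfolding J_def by auto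
      also have "\<dots> \<le> \<mu> (m (m s \<delta> a) \<gamma> c)" by (rule mA(1))
      finally show "t \<le> \<mu> (m s \<delta> (m a \<gamma> c))" by (simp only: asc)
    qed
  next
    fix a \<gamma> c assume a: "a \<in> J"
    show "m c \<gamma> a \<in> J" unfolding J_def
    proof (intro CollectI allI)
      fix s \<delta>
      have "t \<le> \<mu> (m (m s \<delta> c) \<gamma> a)" using a unfolding J_def by auto
      then show "t \<le> \<mu> (m s \<delta> (m c \<gamma> a))" by (simp only: asc)
    qed
  next
    fix x a c z assume eq: "x + a + z = c + z" and a: "a \<in> J" and c: "c \<in> J"
    show "x \<in> J" unfolding J_def
    proof (intro CollectI allI)
      fix s \<delta>
      have "m s \<delta> x + m s \<delta> a + m s \<delta> z = m s \<delta> c + m s \<delta> z"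
        using arg_cong[OF eq, of "m s \<delta>"] by (simp add: dr)
      note hh = hc[OF this]
      have VV: "\<forall>v\<in>J. t \<le> \<mu> (m s \<delta> v)" unfolding J_def by auto
      show "t \<le> \<mu> (m s \<delta> x)" using hh bspec[OF VV a] bspec[OF VV c] by (meson min.boundedI order.trans)
    qed
  qed
  have cross: "\<forall>a\<in>UNIV. \<forall>c\<in>J. \<forall>\<gamma>. t \<le> \<mu> (m a \<gamma> c)" unfolding J_def by auto
  from prime_sets[OF pr t hU hJ cross] show ?thesis
    using hyp unfolding J_def by auto
qed

lemma step2:
  assumes pr: "prime_fuzzy_h_ideal m \<mu>" and t: "0 < t" "t \<le> 1"
    and hyp: "\<forall>\<eta> s \<delta>. t \<le> \<mu> (m (m a \<eta> s) \<delta> b)"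
  shows "t \<le> \<mu> a \<or> t \<le> \<mu> b"
proof -
  have mu: "fuzzy_h_ideal m \<mu>" using pr unfolding prime_fuzzy_h_ideal_def by blast
  have mA: "\<And>x \<gamma> y. \<mu> x \<le> \<mu> (m x \<gamma> y)" "\<And>x \<gamma> y. \<mu> y \<le> \<mu> (m x \<gamma> y)"
    using mu unfolding fuzzy_h_ideal_def by auto
  have add: "\<And>x y. min (\<mu> x) (\<mu> y) \<le> \<mu> (x + y)" using mu unfolding fuzzy_h_ideal_def by blast
  have hc: "\<And>x a b z. x + a + z = b + z \<Longrightarrow> min (\<mu> a) (\<mu> b) \<le> \<mu> x"
    using mu unfolding fuzzy_h_ideal_def by blast
  define I where "I = {a'. \<forall>\<eta> s \<delta>. t \<le> \<mu> (m (m a' \<eta> s) \<delta> b)}"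
  define K where "K = {c. \<forall>a'\<in>I. \<forall>\<gamma>. t \<le> \<mu> (m a' \<gamma> c)}"
  have hI: "hset m I"
    unfolding hset_def
  proof (intro conjI allI impI)
    show "I \<noteq> {}" using hyp I_def by auto
  next
    fix x c assume "x \<in> I" "c \<in> I"
    then have a: "\<And>\<eta> s \<delta>. t \<le> \<mu> (m (m x \<eta> s) \<delta> b)" and c: "\<And>\<eta> s \<delta>. t \<le> \<mu> (m (m c \<eta> s) \<delta> b)" unfolding I_def by auto
    show "x + c \<in> I" unfolding I_def
    proof (intro CollectI allI)
      fix \<eta> s \<delta>
      have "min (\<mu> (m (m x \<eta> s) \<delta> b)) (\<mu> (m (m c \<eta> s) \<delta> b)) \<le> \<mu> (m (m (x + c) \<eta> s) \<delta> b)"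
        using add[of "m (m x \<eta> s) \<delta> b" "m (m c \<eta> s) \<delta> b"] by (simp only: dl)
      then show "t \<le> \<mu> (m (m (x + c) \<eta> s) \<delta> b)" using a c by (meson min.boundedI order.trans)
    qed
  next
    fix x \<gamma> c assume a: "x \<in> I"
    show "m x \<gamma> c \<in> I" unfolding I_def
    proof (intro CollectI allI)
      fix \<eta> s \<delta>
      have "m (m (m x \<gamma> c) \<eta> s) \<delta> b = m (m x \<gamma> (m c \<eta> s)) \<delta> b" by (simp add: asc)
      then show "t \<le> \<mu> (m (m (m x \<gamma> c) \<eta> s) \<delta> b)" using a unfolding I_def by simp
    qed
  next
    fix x \<gamma> c assume a: "x \<in> I"
    show "m c \<gamma> x \<in> I" unfolding I_def
    proof (intro CollectI allI)
      fix \<eta> s \<delta>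
      have "t \<le> \<mu> (m (m x \<eta> s) \<delta> b)" using a unfolding I_def by auto
      also have "\<dots> \<le> \<mu> (m c \<gamma> (m (m x \<eta> s) \<delta> b))" by (rule mA(2))
      finally show "t \<le> \<mu> (m (m (m c \<gamma> x) \<eta> s) \<delta> b)" by (simp only: asc)
    qed
  next
    fix x a' c z assume eq: "x + a' + z = c + z" and a: "a' \<in> I" and c: "c \<in> I"
    show "x \<in> I" unfolding I_def
    proof (intro CollectI allI)
      fix \<eta> s \<delta>
      have "m (m x \<eta> s) \<delta> b + m (m a' \<eta> s) \<delta> b + m (m z \<eta> s) \<delta> b = m (m c \<eta> s) \<delta> b + m (m z \<eta> s) \<delta> b"
        using arg_cong[OF eq, of "\<lambda>u. m (m u \<eta> s) \<delta> b"] by (simp add: dl)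
      note hh = hc[OF this]
      have VV: "\<forall>v\<in>I. t \<le> \<mu> (m (m v \<eta> s) \<delta> b)" unfolding I_def by auto
      show "t \<le> \<mu> (m (m x \<eta> s) \<delta> b)" using hh bspec[OF VV a] bspec[OF VV c] by (meson min.boundedI order.trans)
    qed
  qed
  have sb: "\<And>s \<delta>. m s \<delta> b \<in> K" unfolding K_def I_def by (simp add: asc)
  have hK: "hset m K"
    unfolding hset_def
  proof (intro conjI allI impI)
    show "K \<noteq> {}" using sb by auto
  next
    fix x c assume "x \<in> K" "c \<in> K"
    then have a: "\<And>s \<delta>. s \<in> I \<Longrightarrow> t \<le> \<mu> (m s \<delta> x)" and c: "\<And>s \<delta>. s \<in> I \<Longrightarrow> t \<le> \<mu> (m s \<delta> c)" unfolding K_def by auto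
    show "x + c \<in> K" unfolding K_def
    proof (intro CollectI ballI allI)
      fix s \<delta> assume s: "s \<in> I"
      have "min (\<mu> (m s \<delta> x)) (\<mu> (m s \<delta> c)) \<le> \<mu> (m s \<delta> (x + c))" using add[of "m s \<delta> x" "m s \<delta> c"] by (simp only: dr)
      then show "t \<le> \<mu> (m s \<delta> (x + c))" using a[OF s] c[OF s] by (meson min.boundedI order.trans)
    qed
  next
    fix x \<gamma> c assume a: "x \<in> K"
    show "m x \<gamma> c \<in> K" unfolding K_def
    proof (intro CollectI ballI allI)
      fix s \<delta> assume s: "s \<in> I"
      have "t \<le> \<mu> (m s \<delta> x)" using a s unfolding K_def by auto
      also have "\<dots> \<le> \<mu> (m (m s \<delta> x) \<gamma> c)" by (rule mA(1))
      finally show "t \<le> \<mu> (m s \<delta> (m x \<gamma> c))" by (simp only: asc)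
    qed
  next
    fix x \<gamma> c assume a: "x \<in> K"
    show "m c \<gamma> x \<in> K" unfolding K_def
    proof (intro CollectI ballI allI)
      fix a' \<beta> assume "a' \<in> I"
      then have "m a' \<beta> c \<in> I" using hI unfolding hset_def by blast
      then show "t \<le> \<mu> (m a' \<beta> (m c \<gamma> x))" using a unfolding K_def by (simp add: asc)
    qed
  next
    fix x a' c z assume eq: "x + a' + z = c + z" and a: "a' \<in> K" and c: "c \<in> K"
    show "x \<in> K" unfolding K_def
    proof (intro CollectI ballI allI)
      fix s \<delta> assume s: "s \<in> I"
      have "m s \<delta> x + m s \<delta> a' + m s \<delta> z = m s \<delta> c + m s \<delta> z"
        using arg_cong[OF eq, of "m s \<delta>"] by (simp add: dr)
      note hh = hc[OF this]
      have VV: "\<forall>v\<in>K. t \<le> \<mu> (m s \<delta> v)" using s unfolding K_def by auto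
      show "t \<le> \<mu> (m s \<delta> x)" using hh bspec[OF VV a] bspec[OF VV c] by (meson min.boundedI order.trans)
    qed
  qed
  have cross: "\<forall>a\<in>I. \<forall>c\<in>K. \<forall>\<gamma>. t \<le> \<mu> (m a \<gamma> c)" unfolding K_def by auto
  from prime_sets[OF pr t hI hK cross] show ?thesis
  proof
    assume "\<forall>a\<in>I. t \<le> \<mu> a" then show ?thesis using hyp unfolding I_def by auto
  next
    assume "\<forall>c\<in>K. t \<le> \<mu> c"
    then have "\<forall>s \<delta>. t \<le> \<mu> (m s \<delta> b)" using sb by auto
    then show ?thesis using step1[OF pr t] by auto
  qed
qed

end

theorem proposition3p18:
  fixes m :: "'a::comm_monoid_add \<Rightarrow> 'g::comm_monoid_add \<Rightarrow> 'a \<Rightarrow> 'a"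
    and \<mu> :: "'a \<Rightarrow> real" and x :: 'a
  assumes "gamma_hemiring m"
    and "prime_fuzzy_h_ideal m \<mu>"
  shows "\<forall>y. ext_fuzzy m x \<mu> y =
           Inf {ext_fuzzy m (m (m x \<eta> s1) \<delta> x) \<mu> y | s1 \<eta> \<delta>. True}"
proof
  fix y
  note gh = assms(1) and pr = assms(2)
  have mu: "fuzzy_h_ideal m \<mu>" using pr unfolding prime_fuzzy_h_ideal_def by blast
  have nn: "\<And>v. 0 \<le> \<mu> v" and le1: "\<And>v. \<mu> v \<le> 1" using mu unfolding fuzzy_h_ideal_def fuzzy_subset_def by auto
  have mA: "\<And>x \<gamma> y. \<mu> x \<le> \<mu> (m x \<gamma> y)"
    using mu unfolding fuzzy_h_ideal_def by auto
  have asc: "\<And>a \<alpha> b \<beta> c. m a \<alpha> (m b \<beta> c) = m (m a \<alpha> b) \<beta> c" using gh unfolding gamma_hemiring_def by blast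
  define A where "A = {\<mu> (m (m x \<alpha> s) \<gamma> y) | s \<alpha> \<gamma>. True}"
  define C where "C = (\<lambda>s1 \<eta> \<delta>. {\<mu> (m (m (m (m x \<eta> s1) \<delta> x) \<alpha> s) \<gamma> y) | s \<alpha> \<gamma>. True})"
  define B where "B = {Inf (C s1 \<eta> \<delta>) | s1 \<eta> \<delta>. True}"
  have L: "ext_fuzzy m x \<mu> y = Inf A" unfolding ext_fuzzy_def A_def ..
  have R: "{ext_fuzzy m (m (m x \<eta> s1) \<delta> x) \<mu> y | s1 \<eta> \<delta>. True} = B"
    unfolding ext_fuzzy_def B_def C_def ..
  have Ane: "A \<noteq> {}" unfolding A_def by blast
  have Cne: "\<And>s1 \<eta> \<delta>. C s1 \<eta> \<delta> \<noteq> {}" unfolding C_def by blast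
  have Bne: "B \<noteq> {}" unfolding B_def by blast
  have bA: "bdd_below A" unfolding A_def by (rule bdd_belowI[where m=0]) (auto simp: nn)
  have bC: "\<And>s1 \<eta> \<delta>. bdd_below (C s1 \<eta> \<delta>)" unfolding C_def by (rule bdd_belowI[where m=0]) (auto simp: nn)
  have Cge: "\<And>s1 \<eta> \<delta>. 0 \<le> Inf (C s1 \<eta> \<delta>)"
    using Cne by (rule cInf_greatest) (auto simp: C_def nn)
  have bB: "bdd_below B" unfolding B_def by (rule bdd_belowI[where m=0]) (auto simp: Cge)
  have CA: "\<And>s1 \<eta> \<delta>. C s1 \<eta> \<delta> \<subseteq> A"
  proof
    fix s1 \<eta> \<delta> v assume "v \<in> C s1 \<eta> \<delta>"
    then obtain s \<alpha> \<gamma> where v: "v = \<mu> (m (m (m (m x \<eta> s1) \<delta> x) \<alpha> s) \<gamma> y)" unfolding C_def by blast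
    have "m (m (m (m x \<eta> s1) \<delta> x) \<alpha> s) \<gamma> y = m (m x \<eta> (m (m s1 \<delta> x) \<alpha> s)) \<gamma> y"
      by (simp add: asc)
    then show "v \<in> A" unfolding A_def v by (simp only: mem_Collect_eq) blast
  qed
  have "Inf A \<le> Inf B"
  proof (rule cInf_greatest[OF Bne])
    fix b assume "b \<in> B"
    then obtain s1 \<eta> \<delta> where b: "b = Inf (C s1 \<eta> \<delta>)" unfolding B_def by blast
    show "Inf A \<le> b" unfolding b
      by (rule cInf_greatest[OF Cne], rule cInf_lower[OF _ bA]) (use CA in blast)
  qed
  moreover have "Inf B \<le> Inf A"
  proof (rule cInf_greatest[OF Ane])
    fix e assume "e \<in> A"
    then obtain s \<alpha> \<gamma> where e: "e = \<mu> (m (m x \<alpha> s) \<gamma> y)" unfolding A_def by blast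
    define z where "z = m (m x \<alpha> s) \<gamma> y"
    show "Inf B \<le> e"
    proof (cases "Inf B \<le> 0")
      case True then show ?thesis using nn e by (meson order.trans)
    next
      case False
      have "Inf B \<le> Inf (C 0 0 0)" using bB unfolding B_def by (auto intro: cInf_lower)
      also have "\<dots> \<le> \<mu> (m (m (m (m x 0 0) 0 x) 0 0) 0 y)"
        by (rule cInf_lower[OF _ bC]) (auto simp: C_def)
      also have "\<dots> \<le> 1" by (rule le1)
      finally have t1: "Inf B \<le> 1" .
      have hyp: "\<forall>\<eta> s1 \<delta>. Inf B \<le> \<mu> (m (m x \<eta> s1) \<delta> z)"
      proof (intro allI)
        fix \<eta> s1 \<delta>
        have "Inf B \<le> Inf (C s1 \<eta> \<delta>)" using bB unfolding B_def by (auto intro: cInf_lower)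
        also have "\<dots> \<le> \<mu> (m (m (m (m x \<eta> s1) \<delta> x) \<alpha> s) \<gamma> y)"
          by (rule cInf_lower[OF _ bC]) (auto simp: C_def)
        also have "m (m (m (m x \<eta> s1) \<delta> x) \<alpha> s) \<gamma> y = m (m x \<eta> s1) \<delta> z"
          unfolding z_def by (simp add: asc)
        finally show "Inf B \<le> \<mu> (m (m x \<eta> s1) \<delta> z)" .
      qed
      from step2[OF gh pr _ t1 hyp] False
      have "Inf B \<le> \<mu> x \<or> Inf B \<le> \<mu> z" by linarith
      then show ?thesis
      proof
        assume "Inf B \<le> \<mu> x"
        also have "\<mu> x \<le> \<mu> (m x \<alpha> s)" by (rule mA)
        also have "\<dots> \<le> \<mu> z" unfolding z_def by (rule mA)
        finally show ?thesis unfolding e z_def .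
      qed (simp add: e z_def)
    qed
  qed
  ultimately show "ext_fuzzy m x \<mu> y = Inf {ext_fuzzy m (m (m x \<eta> s1) \<delta> x) \<mu> y | s1 \<eta> \<delta>. True}"
    unfolding L R by simp
qed

end
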